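(* There exist an environment $E$ and a total preorder $\succeq$ on $\Pi^E$ such that $\succeq\in\mathrm{Ord}_{\mathrm{LAR}}(E)$ but $\succeq\notin\mathrm{Ord}_{\mathrm{RRL}}(E)$.
   Context: An environment is a tuple $E=(\mathcal S,\mathcal A,\mathcal T,\mathcal I)$ where $\mathcal S,\mathcal A$ are finite nonempty sets, $\mathcal T:\mathcal S\times\mathcal A\to\Delta(\mathcal S)$ and $\mathcal I\in\Delta(\mathcal S)$. A policy is a map $\pi:\mathcal S\to\Delta(\mathcal A)$ (stationary, possibly stochastic); $\Pi^E$ denotes the set of all policies. A trajectory $\xi=(s_0,a_0,s_1,a_1,\dots)$ is generated under $\pi$ by $s_0\sim\mathcal I$, $a_t\sim\pi(s_t)$, $s_{t+1}\sim\mathcal T(s_t,a_t)$; $\mathbb E^\pi_\xi$ denotes expectation under this distribution. An objective-specification formalism $X$ assigns to each environment $E$ a set of objective specifications, each inducing a total preorder $\succeq$ on $\Pi^E$; $\mathrm{Ord}_X(E)$ is the set of total preorders so induced. A specification defining a scalar $J:\Pi^E\to\mathbb R$ induces $\pi_1\succeq\pi_2\iff J(\pi_1)\ge J(\pi_2)$. LAR: specification $(\mathcal R)$, $\mathcal R:\mathcal S\times\mathcal A\times\mathcal S\to\mathbb R$, $J(\pi)=\lim_{N\to\infty}\frac1N\mathbb E^\pi_\xi[\sum_{t=0}^{N-1}\mathcal R(s_t,a_t,s_{t+1})]$. RRL: specification $(\mathcal R,\alpha,F,\gamma)$ with $\mathcal R:\mathcal S\times\mathcal A\times\mathcal S\to\mathbb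 R$, $\alpha\in\mathbb R$, $F:\Delta(\mathcal A)\to\mathbb R$, $\gamma\in[0,1)$; $J(\pi)=\mathbb E^\pi_\xi[\sum_{t=0}^\infty\gamma^t(\mathcal R(s_t,a_t,s_{t+1})-\alpha F(\pi(s_t)))]$. *)

theory Defs
  imports "HOL-Probability.Probability_Mass_Function"
begin

record env =
  St :: "nat set"
  Ac :: "nat set"
  Tr :: "nat \<Rightarrow> nat \<Rightarrow> nat pmf"
  Init :: "nat pmf"

definition is_env :: "env \<Rightarrow> bool" where
  "is_env E \<longleftrightarrow> finite (St E) \<and> St E \<noteq> {} \<and> finite (Ac E) \<and> Ac E \<noteq> {}
     \<and> (\<forall>s\<in>St E. \<forall>a\<in>Ac E. set_pmf (Tr E s a) \<subseteq> St E)
     \<and> set_pmf (Init E) \<subseteq> St E"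

definition policies :: "env \<Rightarrow> (nat \<Rightarrow> nat pmf) set" where
  "policies E = {\<pi>. (\<forall>s\<in>St E. set_pmf (\<pi> s) \<subseteq> Ac E)
                    \<and> (\<forall>s. s \<notin> St E \<longrightarrow> \<pi> s = return_pmf undefined)}"

primrec state_dist :: "env \<Rightarrow> (nat \<Rightarrow> nat pmf) \<Rightarrow> nat \<Rightarrow> nat pmf" where
  "state_dist E \<pi> 0 = Init E"
| "state_dist E \<pi> (Suc t) =
     bind_pmf (state_dist E \<pi> t) (\<lambda>s. bind_pmf (\<pi> s) (\<lambda>a. Tr E s a))"

definition step_dist :: "env \<Rightarrow> (nat \<Rightarrow> nat pmf) \<Rightarrow> nat \<Rightarrow> (nat \<times> nat \<times> nat) pmf" where
  "step_dist E \<pi> t = bind_pmf (state_dist E \<pi> t)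
     (\<lambda>s. bind_pmf (\<pi> s) (\<lambda>a. map_pmf (\<lambda>s'. (s, a, s')) (Tr E s a)))"

text \<open>LAR objective (expectation of the finite sum written as the sum of expectations).\<close>
definition LAR_J :: "env \<Rightarrow> (nat \<Rightarrow> nat \<Rightarrow> nat \<Rightarrow> real) \<Rightarrow> (nat \<Rightarrow> nat pmf) \<Rightarrow> real" where
  "LAR_J E R \<pi> = lim (\<lambda>N. (1 / real N) *
      (\<Sum>t<N. measure_pmf.expectation (step_dist E \<pi> t) (\<lambda>(s, a, s'). R s a s')))"

text \<open>RRL objective (expectation of the discounted series written as the series of expectations).\<close>
definition RRL_J :: "env \<Rightarrow> (nat \<Rightarrow> nat \<Rightarrow> nat \<Rightarrow> real) \<Rightarrow> real \<Rightarrow> (nat pmf \<Rightarrow> real) \<Rightarrow> real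
                      \<Rightarrow> (nat \<Rightarrow> nat pmf) \<Rightarrow> real" where
  "RRL_J E R \<alpha> F \<gamma> \<pi> = (\<Sum>t. \<gamma> ^ t * measure_pmf.expectation (step_dist E \<pi> t)
      (\<lambda>(s, a, s'). R s a s' - \<alpha> * F (\<pi> s)))"

definition induced_order :: "'p set \<Rightarrow> ('p \<Rightarrow> real) \<Rightarrow> ('p \<times> 'p) set" where
  "induced_order P J = {(p1, p2). p1 \<in> P \<and> p2 \<in> P \<and> J p1 \<ge> J p2}"

definition Ord_LAR :: "env \<Rightarrow> ((nat \<Rightarrow> nat pmf) \<times> (nat \<Rightarrow> nat pmf)) set set" where
  "Ord_LAR E = {induced_order (policies E) (LAR_J E R) | R. True}"

definition Ord_RRL :: "env \<Rightarrow> ((nat \<Rightarrow> nat pmf) \<times> (nat \<Rightarrow> nat pmf)) set set" where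
  "Ord_RRL E = {induced_order (policies E) (RRL_J E R \<alpha> F \<gamma>) | R \<alpha> F \<gamma>. 0 \<le> \<gamma> \<and> \<gamma> < 1}"

end

theory Submission
  imports Defs
begin

definition EE :: env where
  "EE = \<lparr>St = {0,1,2}, Ac = {0,1},
         Tr = (\<lambda>s a. return_pmf (if s = 0 \<and> a = 0 then 1 else 2)),
         Init = return_pmf 0\<rparr>"

definition pol :: "nat \<Rightarrow> nat \<Rightarrow> nat \<Rightarrow> nat pmf" where
  "pol x y = (\<lambda>s. if s = 0 then return_pmf x else if s = 1 then return_pmf 0
                 else if s = 2 then return_pmf y else return_pmf undefined)"

definition sq :: "nat \<Rightarrow> nat \<Rightarrow> nat" where
  "sq x t = (if t = 0 then 0 else if t = 1 then (if x = 0 then 1 else 2) else 2)"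

lemma pol_in: "x \<in> {0,1} \<Longrightarrow> y \<in> {0,1} \<Longrightarrow> pol x y \<in> policies EE"
  by (auto simp: policies_def pol_def EE_def)

lemma sd: "state_dist EE (pol x y) t = return_pmf (sq x t)"
proof (induction t)
  case 0 then show ?case by (simp add: EE_def sq_def)
next
  case (Suc t) then show ?case
    by (cases "t = 0"; cases "t = 1"; simp add: EE_def sq_def pol_def bind_return_pmf)
qed

lemma stepd: "step_dist EE (pol x y) t =
   return_pmf (sq x t, (if sq x t = 0 then x else if sq x t = 1 then 0 else y), sq x (Suc t))"
  unfolding step_dist_def sd
  by (cases "t = 0"; cases "t = 1"; cases "x = 0";
      simp add: EE_def sq_def pol_def map_pmf_def bind_return_pmf)

definition RL :: "nat \<Rightarrow> nat \<Rightarrow> nat \<Rightarrow> real" where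
  "RL s a s' = (if s = 2 \<and> a = 1 then 1 else 0)"

lemma avg_lim:
  fixes e :: "nat \<Rightarrow> real"
  assumes "\<And>t. t \<ge> 2 \<Longrightarrow> e t = c"
  shows "lim (\<lambda>N. (1 / real N) * (\<Sum>t<N. e t)) = c"
proof -
  have eq: "\<forall>\<^sub>F N in sequentially. (e 0 + e 1 - 2 * c) / real N + c = (1 / real N) * (\<Sum>t<N. e t)"
  proof (rule eventually_sequentiallyI[of 2])
    fix N :: nat assume N: "2 \<le> N"
    have "{..<N} = {0,1} \<union> {2..<N}" using N by auto
    hence "(\<Sum>t<N. e t) = e 0 + e 1 + (\<Sum>t\<in>{2..<N}. e t)" by (simp add: sum.union_disjoint)
    also have "(\<Sum>t\<in>{2..<N}. e t) = (\<Sum>t\<in>{2..<N}. c)" using assms by (intro sum.cong) auto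
    also have "\<dots> = (real N - 2) * c" using N by (simp add: of_nat_diff)
    finally show "(e 0 + e 1 - 2 * c) / real N + c = (1 / real N) * (\<Sum>t<N. e t)"
      using N by (simp add: field_simps)
  qed
  have "(\<lambda>N. (e 0 + e 1 - 2 * c) / real N + c) \<longlonglongrightarrow> 0 + c"
    by (intro tendsto_add tendsto_const tendsto_divide_0[OF tendsto_const] filterlim_at_top_imp_at_infinity[OF filterlim_real_sequentially])
  hence "(\<lambda>N. (1 / real N) * (\<Sum>t<N. e t)) \<longlonglongrightarrow> c"
    using Lim_transform_eventually[OF _ eq] by simp
  thus ?thesis by (rule limI)
qed

lemma lar_val: "y \<in> {0,1} \<Longrightarrow> LAR_J EE RL (pol x y) = real y"
  unfolding LAR_J_def
  by (rule avg_lim) (auto simp: stepd sq_def RL_def)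

lemma rrl_sum:
  fixes \<gamma> w u v :: real
  assumes "0 \<le> \<gamma>" "\<gamma> < 1"
  shows "(\<Sum>t. \<gamma> ^ t * (if t = 0 then u else if t = 1 then v else w))
         = w / (1 - \<gamma>) + (u - w) + \<gamma> * (v - w)"
proof -
  have g: "(\<lambda>t. \<gamma> ^ t * w) sums (1 / (1 - \<gamma>) * w)"
    by (rule sums_mult2, rule geometric_sums) (use assms in auto)
  have s0: "(\<lambda>t. if t = 0 then \<gamma>^t * (u - w) else 0) sums (\<gamma>^0 * (u - w))"
    by (rule sums_single)
  have s1: "(\<lambda>t. if t = 1 then \<gamma>^t * (v - w) else 0) sums (\<gamma>^1 * (v - w))"
    by (rule sums_single)
  have "(\<lambda>t. \<gamma> ^ t * w + (if t = 0 then \<gamma>^t * (u - w) else 0) + (if t = 1 then \<gamma>^t * (v - w) else 0))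
        sums (1 / (1 - \<gamma>) * w + \<gamma>^0 * (u - w) + \<gamma>^1 * (v - w))"
    by (intro sums_add g s0 s1)
  moreover have "(\<lambda>t. \<gamma> ^ t * w + (if t = 0 then \<gamma>^t * (u - w) else 0) + (if t = 1 then \<gamma>^t * (v - w) else 0))
      = (\<lambda>t. \<gamma> ^ t * (if t = 0 then u else if t = 1 then v else w))"
    by (auto simp: algebra_simps)
  ultimately show ?thesis by (simp add: sums_iff)
qed

lemma rrl_val:
  assumes "0 \<le> \<gamma>" "\<gamma> < 1" "x \<in> {0,1}"
  shows "RRL_J EE R \<alpha> F \<gamma> (pol x y) =
    (R 2 y 2 - \<alpha> * F (return_pmf y)) / (1 - \<gamma>)
    + ((if x = 0 then R 0 0 1 else R 0 1 2) - \<alpha> * F (return_pmf x) - (R 2 y 2 - \<alpha> * F (return_pmf y)))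
    + \<gamma> * ((if x = 0 then R 1 0 2 - \<alpha> * F (return_pmf 0) else R 2 y 2 - \<alpha> * F (return_pmf y))
           - (R 2 y 2 - \<alpha> * F (return_pmf y)))"
proof -
  have "RRL_J EE R \<alpha> F \<gamma> (pol x y) = (\<Sum>t. \<gamma> ^ t * (if t = 0 then
      (if x = 0 then R 0 0 1 else R 0 1 2) - \<alpha> * F (return_pmf x) else if t = 1 then
      (if x = 0 then R 1 0 2 - \<alpha> * F (return_pmf 0) else R 2 y 2 - \<alpha> * F (return_pmf y))
      else R 2 y 2 - \<alpha> * F (return_pmf y)))"
    unfolding RRL_J_def stepd
    apply (rule arg_cong[where f = suminf])
    apply (rule ext)
    subgoal for t
      using assms(3) by (cases "t = 0"; cases "t = 1"; auto simp: sq_def pol_def)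
    done
  also note rrl_sum[OF assms(1,2)]
  finally show ?thesis .
qed

lemma alg1: "(\<gamma>::real) \<noteq> 1 \<Longrightarrow> (w1 / (1 - \<gamma>) + (u - w1)) - (w0 / (1 - \<gamma>) + (u - w0)) = (w1 - w0) * \<gamma> / (1 - \<gamma>)"
proof -
  assume "\<gamma> \<noteq> 1" hence d: "1 - \<gamma> \<noteq> 0" by simp
  have "(w1 / (1 - \<gamma>) + (u - w1)) - (w0 / (1 - \<gamma>) + (u - w0)) = (w1 - w0) / (1 - \<gamma>) - (w1 - w0)"
    by (simp add: diff_divide_distrib)
  also have "\<dots> = ((w1 - w0) - (w1 - w0) * (1 - \<gamma>)) / (1 - \<gamma>)" using d by (simp add: field_simps)
  also have "(w1 - w0) - (w1 - w0) * (1 - \<gamma>) = (w1 - w0) * \<gamma>" by (simp add: algebra_simps)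
  finally show ?thesis .
qed

lemma alg2: "(\<gamma>::real) \<noteq> 1 \<Longrightarrow> (w1 / (1 - \<gamma>) + (u - w1) + \<gamma> * (v - w1)) - (w0 / (1 - \<gamma>) + (u - w0) + \<gamma> * (v - w0)) = (w1 - w0) * \<gamma> * \<gamma> / (1 - \<gamma>)"
proof -
  assume "\<gamma> \<noteq> 1" hence d: "1 - \<gamma> \<noteq> 0" by simp
  have "(w1 / (1 - \<gamma>) + (u - w1) + \<gamma> * (v - w1)) - (w0 / (1 - \<gamma>) + (u - w0) + \<gamma> * (v - w0)) = (w1 - w0) / (1 - \<gamma>) - (w1 - w0) * (1 + \<gamma>)"
    by (simp add: diff_divide_distrib algebra_simps)
  also have "\<dots> = ((w1 - w0) - (w1 - w0) * (1 + \<gamma>) * (1 - \<gamma>)) / (1 - \<gamma>)" using d by (simp add: field_simps)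
  also have "(w1 - w0) - (w1 - w0) * (1 + \<gamma>) * (1 - \<gamma>) = (w1 - w0) * \<gamma> * \<gamma>" by (simp add: algebra_simps)
  finally show ?thesis .
qed

theorem mainTheorem19:
  shows "\<exists>E r. is_env E \<and> preorder_on (policies E) r \<and> total_on (policies E) r
            \<and> r \<in> Ord_LAR E \<and> r \<notin> Ord_RRL E"
proof (intro exI conjI)
  let ?r = "induced_order (policies EE) (LAR_J EE RL)"
  show "is_env EE" by (auto simp: is_env_def EE_def)
  show "preorder_on (policies EE) ?r"
    by (auto simp: preorder_on_def refl_on_def trans_def induced_order_def)
  show "total_on (policies EE) ?r"
    by (auto simp: total_on_def induced_order_def)
  show "?r \<in> Ord_LAR EE" by (auto simp: Ord_LAR_def)
  show "?r \<notin> Ord_RRL EE"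
  proof
    assume "?r \<in> Ord_RRL EE"
    then obtain R \<alpha> F \<gamma> where g: "0 \<le> \<gamma>" "\<gamma> < 1"
      and req: "?r = induced_order (policies EE) (RRL_J EE R \<alpha> F \<gamma>)"
      by (auto simp: Ord_RRL_def)
    let ?J = "RRL_J EE R \<alpha> F \<gamma>"
    have key: "LAR_J EE RL (pol a b) \<ge> LAR_J EE RL (pol c d) \<longleftrightarrow> ?J (pol a b) \<ge> ?J (pol c d)"
      if "a \<in> {0,1}" "b \<in> {0,1}" "c \<in> {0,1}" "d \<in> {0,1}" for a b c d
    proof -
      have "(pol a b, pol c d) \<in> ?r \<longleftrightarrow> (pol a b, pol c d) \<in> induced_order (policies EE) ?J"
        using req by simp
      thus ?thesis using pol_in that by (simp add: induced_order_def)
    qed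
    have e1: "?J (pol 1 1) = ?J (pol 0 1)"
      using key[of 1 1 0 1] key[of 0 1 1 1] by (simp add: lar_val)
    have e0: "?J (pol 1 0) = ?J (pol 0 0)"
      using key[of 1 0 0 0] key[of 0 0 1 0] by (simp add: lar_val)
    have lt: "?J (pol 1 0) < ?J (pol 1 1)"
      using key[of 1 0 1 1] by (simp add: lar_val)
    define w1 where "w1 = R 2 1 2 - \<alpha> * F (return_pmf 1)"
    define w0 where "w0 = R 2 0 2 - \<alpha> * F (return_pmf 0)"
    define u0 where "u0 = R 0 0 1 - \<alpha> * F (return_pmf 0)"
    define u1 where "u1 = R 0 1 2 - \<alpha> * F (return_pmf 1)"
    define v where "v = R 1 0 2 - \<alpha> * F (return_pmf 0)"
    have J11: "?J (pol 1 1) = w1 / (1 - \<gamma>) + (u1 - w1)"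
      using g by (simp add: rrl_val w1_def u1_def)
    have J10: "?J (pol 1 0) = w0 / (1 - \<gamma>) + (u1 - w0)"
      using g by (simp add: rrl_val w0_def u1_def)
    have J01: "?J (pol 0 1) = w1 / (1 - \<gamma>) + (u0 - w1) + \<gamma> * (v - w1)"
      using g by (simp add: rrl_val w1_def u0_def v_def)
    have J00: "?J (pol 0 0) = w0 / (1 - \<gamma>) + (u0 - w0) + \<gamma> * (v - w0)"
      using g by (simp add: rrl_val w0_def u0_def v_def)
    have "?J (pol 1 1) - ?J (pol 1 0) = (w1 - w0) * \<gamma> / (1 - \<gamma>)"
      using g unfolding J11 J10 by (intro alg1) simp
    moreover have "?J (pol 0 1) - ?J (pol 0 0) = (w1 - w0) * \<gamma> * \<gamma> / (1 - \<gamma>)"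
      using g unfolding J01 J00 by (intro alg2) simp
    ultimately have A: "(w1 - w0) * \<gamma> / (1 - \<gamma>) = (w1 - w0) * \<gamma> * \<gamma> / (1 - \<gamma>)"
      and B: "(w1 - w0) * \<gamma> / (1 - \<gamma>) > 0" using e1 e0 lt by linarith+
    from A g have "(w1 - w0) * \<gamma> = (w1 - w0) * \<gamma> * \<gamma>"
      using divide_cancel_right[of "(w1 - w0) * \<gamma>" "1 - \<gamma>" "(w1 - w0) * \<gamma> * \<gamma>"] by linarith
    hence "(w1 - w0) * \<gamma> * (1 - \<gamma>) = 0" by (simp add: algebra_simps)
    hence "(w1 - w0) * \<gamma> = 0" using g by simp
    with B show False by simp
  qed
qed

end
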